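(* Let $P$ be a 6-stack and let $Q\subseteq P$ be a subset which, with the induced order, is isomorphic to a tower of sections. If $j\ge 0$ is an integer with $\#Q(j)=3$, where $Q(j)$ denotes the set of elements of rank $j$ in the poset $Q$, then $Q(j)=P(i)$ for some integer $i\ge 0$.
   Context: All posets are finite. For a poset $P$ and $p\in P$, the rank $r(p)$ of $p$ is the largest $m$ such that there is a chain $p_0<\dots<p_m=p$ in $P$. $P$ is ranked of rank $r(P)$ if every maximal chain has exactly $r(P)+1$ elements. For $0\le i\le j$, $P(i,j)=\{p\in P:i\le r(p)\le j\}$, $P(i)=P(i,i)$ (induced order). The 6-crown $C_6$ is the poset on $\{x_0,x_1,x_2,y_0,y_1,y_2\}$ whose only strict comparabilities are $x_0<y_0>x_1<y_1>x_2<y_2>x_0$. A 6-stack is a ranked poset $P$ of rank $n\ge1$ such that $P(i,i+1)\cong C_6$ for each $0\le i<n$. The ordinal sum of posets $P_1,\dots,P_k$ ($k\ge1$) is their disjoint union ordered by the orders of the $P_i$ together with $p<q$ whenever $p\in P_i,q\in P_j,i<j$. A section is either a two-element antichain or a poset on the set $\{[i,k]: 0\le i\le 2,\ 0\le k\le n\}$ (with $3(n+1)$ distinct elements), for some $n\ge 1$, such that: (1) $[i,k]<[i,l]$ whenever $0\le k<l\le n$; (2) for each $k$, $\{[0,k],[1,k],[2,k]\}$ is an antichain; (3) $[i,k]<[j,l]$ implies $[i+1,k]<[j+1,l]$ (first indices mod $3$); (4) for each $0\le k<n$ there are $i,j$ with $[i,k]\not<[j,k+1]$. A tower of sections is an ordinal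 sum of one or more sections. *)

theory Defs
  imports Main
begin

text \<open>A finite poset is a finite carrier A together with a strict order lt on A.
  All notions below refer to the order induced on the given carrier.\<close>

definition poset :: "'a set \<Rightarrow> ('a \<Rightarrow> 'a \<Rightarrow> bool) \<Rightarrow> bool" where
  "poset A lt \<longleftrightarrow> finite A \<and> (\<forall>x\<in>A. \<not> lt x x) \<and>
     (\<forall>x\<in>A. \<forall>y\<in>A. \<forall>z\<in>A. lt x y \<and> lt y z \<longrightarrow> lt x z)"

definition order_iso :: "'a set \<Rightarrow> ('a \<Rightarrow> 'a \<Rightarrow> bool) \<Rightarrow> 'b set \<Rightarrow> ('b \<Rightarrow> 'b \<Rightarrow> bool) \<Rightarrow> bool" where
  "order_iso A la B lb \<longleftrightarrow> (\<exists>f. bij_betw f A B \<and> (\<forall>x\<in>A. \<forall>y\<in>A. la x y \<longleftrightarrow> lb (f x) (f y)))"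

definition chain_to :: "'a set \<Rightarrow> ('a \<Rightarrow> 'a \<Rightarrow> bool) \<Rightarrow> 'a list \<Rightarrow> 'a \<Rightarrow> bool" where
  "chain_to A lt cs p \<longleftrightarrow> cs \<noteq> [] \<and> set cs \<subseteq> A \<and> sorted_wrt lt cs \<and> last cs = p"

definition rank :: "'a set \<Rightarrow> ('a \<Rightarrow> 'a \<Rightarrow> bool) \<Rightarrow> 'a \<Rightarrow> nat" where
  "rank A lt p = (GREATEST m. \<exists>cs. chain_to A lt cs p \<and> length cs = m + 1)"

definition levels :: "'a set \<Rightarrow> ('a \<Rightarrow> 'a \<Rightarrow> bool) \<Rightarrow> nat \<Rightarrow> nat \<Rightarrow> 'a set" where
  "levels A lt i j = {p \<in> A. i \<le> rank A lt p \<and> rank A lt p \<le> j}"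

definition level :: "'a set \<Rightarrow> ('a \<Rightarrow> 'a \<Rightarrow> bool) \<Rightarrow> nat \<Rightarrow> 'a set" where
  "level A lt i = {p \<in> A. rank A lt p = i}"

definition is_chain :: "'a set \<Rightarrow> ('a \<Rightarrow> 'a \<Rightarrow> bool) \<Rightarrow> 'a set \<Rightarrow> bool" where
  "is_chain A lt C \<longleftrightarrow> C \<subseteq> A \<and> (\<forall>x\<in>C. \<forall>y\<in>C. x \<noteq> y \<longrightarrow> lt x y \<or> lt y x)"

definition maximal_chain :: "'a set \<Rightarrow> ('a \<Rightarrow> 'a \<Rightarrow> bool) \<Rightarrow> 'a set \<Rightarrow> bool" where
  "maximal_chain A lt C \<longleftrightarrow> is_chain A lt C \<and> (\<forall>D. is_chain A lt D \<and> C \<subseteq> D \<longrightarrow> D = C)"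

definition ranked_of_rank :: "'a set \<Rightarrow> ('a \<Rightarrow> 'a \<Rightarrow> bool) \<Rightarrow> nat \<Rightarrow> bool" where
  "ranked_of_rank A lt n \<longleftrightarrow> (\<forall>C. maximal_chain A lt C \<longrightarrow> card C = n + 1)"

text \<open>The 6-crown on {0..5}: x_k = k, y_k = 3 + k;
  x0<y0>x1<y1>x2<y2>x0.\<close>
definition crown6_less :: "nat \<Rightarrow> nat \<Rightarrow> bool" where
  "crown6_less a b \<longleftrightarrow> (a, b) \<in> {(0,3), (1,3), (1,4), (2,4), (2,5), (0,5)}"

definition six_stack :: "'a set \<Rightarrow> ('a \<Rightarrow> 'a \<Rightarrow> bool) \<Rightarrow> bool" where
  "six_stack A lt \<longleftrightarrow> poset A lt \<and>
     (\<exists>n\<ge>1. ranked_of_rank A lt n \<and>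
        (\<forall>i<n. order_iso (levels A lt i (i + 1)) lt {0..5::nat} crown6_less))"

text \<open>A section (up to isomorphism): a two-element antichain, or a poset whose
  elements are enumerated bijectively as [i,k] = f (i,k), i<3, k\<le>n, satisfying (1)-(4).\<close>
definition is_section :: "'a set \<Rightarrow> ('a \<Rightarrow> 'a \<Rightarrow> bool) \<Rightarrow> bool" where
  "is_section S lt \<longleftrightarrow> poset S lt \<and>
    ((card S = 2 \<and> (\<forall>x\<in>S. \<forall>y\<in>S. \<not> lt x y)) \<or>
     (\<exists>n\<ge>1. \<exists>f :: nat \<times> nat \<Rightarrow> 'a. bij_betw f ({0..<3} \<times> {0..n}) S \<and>
        (\<forall>i<3. \<forall>k l. k < l \<and> l \<le> n \<longrightarrow> lt (f (i, k)) (f (i, l))) \<and>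
        (\<forall>k\<le>n. \<forall>i<3. \<forall>j<3. \<not> lt (f (i, k)) (f (j, k))) \<and>
        (\<forall>i<3. \<forall>j<3. \<forall>k\<le>n. \<forall>l\<le>n. lt (f (i, k)) (f (j, l)) \<longrightarrow>
            lt (f ((i + 1) mod 3, k)) (f ((j + 1) mod 3, l))) \<and>
        (\<forall>k<n. \<exists>i<3. \<exists>j<3. \<not> lt (f (i, k)) (f (j, k + 1)))))"

text \<open>Poset isomorphic to a tower of sections, i.e. an ordinal sum of m \<ge> 1 sections:
  the carrier is split into blocks b x \<in> {0..<m}, each block (with the induced order)
  is a section, and everything in an earlier block is below everything in a later one.\<close>
definition is_tower_of_sections :: "'a set \<Rightarrow> ('a \<Rightarrow> 'a \<Rightarrow> bool) \<Rightarrow> bool" where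
  "is_tower_of_sections A lt \<longleftrightarrow> poset A lt \<and>
     (\<exists>m\<ge>1. \<exists>b :: 'a \<Rightarrow> nat. (\<forall>x\<in>A. b x < m) \<and>
        (\<forall>t<m. is_section {x \<in> A. b x = t} lt) \<and>
        (\<forall>x\<in>A. \<forall>y\<in>A. b x < b y \<longrightarrow> lt x y))"

end

theory Submission
  imports Defs
begin

lemma sw_distinct: "sorted_wrt R xs \<Longrightarrow> \<forall>x\<in>set xs. \<not> R x x \<Longrightarrow> distinct xs"
  by (induction xs) auto

lemma sw_last: "sorted_wrt R xs \<Longrightarrow> xs \<noteq> [] \<Longrightarrow> c \<in> set xs \<Longrightarrow> c = last xs \<or> R c (last xs)"
  by (induction xs) auto

lemma sw_comp: "sorted_wrt R xs \<Longrightarrow> x \<in> set xs \<Longrightarrow> y \<in> set xs \<Longrightarrow> x \<noteq> y \<Longrightarrow> R x y \<or> R y x"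
  by (induction xs) auto

lemma chain_len:
  assumes "poset A lt" "chain_to A lt cs p"
  shows "length cs \<le> card A" "distinct cs"
proof -
  show d: "distinct cs" using assms sw_distinct[of lt cs] unfolding poset_def chain_to_def by blast
  have "card (set cs) \<le> card A" using assms unfolding poset_def chain_to_def by (simp add: card_mono)
  then show "length cs \<le> card A" using d distinct_card by metis
qed

lemma rank_attained:
  assumes "poset A lt" "p \<in> A"
  shows "\<exists>cs. chain_to A lt cs p \<and> length cs = rank A lt p + 1"
  unfolding rank_def
proof (rule GreatestI_nat[where k=0 and b="card A"])
  show "\<exists>cs. chain_to A lt cs p \<and> length cs = 0 + 1"
    by (rule exI[of _ "[p]"]) (use assms in \<open>auto simp: chain_to_def\<close>)
next
  fix y assume "\<exists>cs. chain_to A lt cs p \<and> length cs = y + 1"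
  then show "y \<le> card A" using chain_len[OF assms(1)] by fastforce
qed

lemma rank_ge:
  assumes "poset A lt" "chain_to A lt cs p"
  shows "length cs \<le> rank A lt p + 1"
proof -
  have "length cs - 1 \<le> rank A lt p"
    unfolding rank_def
  proof (rule Greatest_le_nat[where b="card A"])
    show "\<exists>csa. chain_to A lt csa p \<and> length csa = length cs - 1 + 1"
      using assms(2) by (auto simp: chain_to_def)
  next
    fix y assume "\<exists>cs. chain_to A lt cs p \<and> length cs = y + 1"
    then show "y \<le> card A" using chain_len[OF assms(1)] by fastforce
  qed
  then show ?thesis by linarith
qed

lemma rank_mono:
  assumes "poset A lt" "x \<in> A" "y \<in> A" "lt x y"
  shows "rank A lt x < rank A lt y"
proof -
  obtain cs where cs: "chain_to A lt cs x" "length cs = rank A lt x + 1"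
    using rank_attained[OF assms(1,2)] by blast
  have "\<forall>c\<in>set cs. lt c y"
  proof
    fix c assume c: "c \<in> set cs"
    have "c = x \<or> lt c x" using sw_last[of lt cs c] cs c unfolding chain_to_def by auto
    moreover have "c \<in> A" using c cs unfolding chain_to_def by auto
    ultimately show "lt c y" using assms unfolding poset_def by blast
  qed
  then have "chain_to A lt (cs @ [y]) y" using cs assms unfolding chain_to_def
    by (auto simp: sorted_wrt_append)
  from rank_ge[OF assms(1) this] cs show ?thesis by simp
qed

lemma rank_pred:
  assumes "poset A lt" "y \<in> A" "rank A lt y = Suc b"
  shows "\<exists>v\<in>A. lt v y \<and> rank A lt v = b"
proof -
  obtain cs where cs: "chain_to A lt cs y" "length cs = b + 2"
    using rank_attained[OF assms(1,2)] assms(3) by auto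
  then obtain bs where bs: "cs = bs @ [y]" unfolding chain_to_def
    by (metis append_butlast_last_id)
  have "bs \<noteq> []" using bs cs by auto
  define v where "v = last bs"
  have vin: "v \<in> set bs" using \<open>bs \<noteq> []\<close> v_def by simp
  have "chain_to A lt bs v" using cs bs \<open>bs \<noteq> []\<close> v_def unfolding chain_to_def
    by (auto simp: sorted_wrt_append)
  then have r1: "b \<le> rank A lt v" using rank_ge[OF assms(1)] bs cs by fastforce
  have lv: "lt v y" using cs bs vin unfolding chain_to_def by (auto simp: sorted_wrt_append)
  have vA: "v \<in> A" using cs bs vin unfolding chain_to_def by auto
  have "rank A lt v < Suc b" using rank_mono[OF assms(1) vA assms(2) lv] assms(3) by simp
  then show ?thesis using r1 vA lv by (intro bexI[of _ v]) auto
qed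

lemma rank_le_n:
  assumes "poset A lt" "ranked_of_rank A lt n" "p \<in> A"
  shows "rank A lt p \<le> n"
proof -
  obtain cs where cs: "chain_to A lt cs p" "length cs = rank A lt p + 1"
    using rank_attained[OF assms(1,3)] by blast
  define C0 where "C0 = set cs"
  have fin: "finite A" using assms(1) unfolding poset_def by simp
  have c0: "is_chain A lt C0" unfolding is_chain_def
  proof (intro conjI ballI impI)
    show "C0 \<subseteq> A" using cs unfolding C0_def chain_to_def by simp
    fix x y assume "x \<in> C0" "y \<in> C0" "x \<noteq> y"
    then show "lt x y \<or> lt y x" using sw_comp[of lt cs x y] cs unfolding C0_def chain_to_def by simp
  qed
  have "\<exists>D. (is_chain A lt D \<and> C0 \<subseteq> D) \<and> (\<forall>E. is_chain A lt E \<and> C0 \<subseteq> E \<longrightarrow> card E \<le> card D)"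
  proof (rule ex_has_greatest_nat[where k=C0 and b="card A + 1"])
    show "is_chain A lt C0 \<and> C0 \<subseteq> C0" using c0 by simp
    show "\<forall>y. is_chain A lt y \<and> C0 \<subseteq> y \<longrightarrow> card y < card A + 1"
    proof (intro allI impI)
      fix y assume "is_chain A lt y \<and> C0 \<subseteq> y"
      then have "y \<subseteq> A" unfolding is_chain_def by blast
      then show "card y < card A + 1" using card_mono[OF fin] by (simp add: le_imp_less_Suc)
    qed
  qed
  then obtain D where D: "is_chain A lt D" "C0 \<subseteq> D"
    and Dmax: "\<And>E. is_chain A lt E \<Longrightarrow> C0 \<subseteq> E \<Longrightarrow> card E \<le> card D" by blast
  have "maximal_chain A lt D"
    unfolding maximal_chain_def
  proof (intro conjI allI impI)
    show "is_chain A lt D" by fact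
    fix E assume E: "is_chain A lt E \<and> D \<subseteq> E"
    have "finite E" using E fin unfolding is_chain_def by (auto intro: finite_subset)
    have "card E \<le> card D" using E D Dmax[of E] by auto
    moreover have "card D \<le> card E" using E \<open>finite E\<close> by (simp add: card_mono)
    ultimately have "card D = card E" by simp
    then show "E = D" using card_subset_eq[OF \<open>finite E\<close>, of D] E by simp
  qed
  then have "card D = n + 1" using assms(2) unfolding ranked_of_rank_def by blast
  moreover have "finite D" using D(1) fin unfolding is_chain_def by (auto intro: finite_subset)
  then have "card C0 \<le> card D" using D(2) by (simp add: card_mono)
  moreover have "card C0 = length cs" using chain_len(2)[OF assms(1) cs(1)] unfolding C0_def by (simp add: distinct_card)
  ultimately show ?thesis using cs by simp
qed


lemma crown_bds: "crown6_less a b \<Longrightarrow> a < 3 \<and> 3 \<le> b \<and> b \<le> 5"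
  unfolding crown6_less_def by auto

lemma crown_no3:
  fixes a b c :: nat
  assumes "a < 3" "3 \<le> b" "b \<le> 5" "c \<le> 5" "a \<noteq> c" "b \<noteq> c"
    "\<not> crown6_less a b" "\<not> crown6_less b a" "\<not> crown6_less a c" "\<not> crown6_less c a"
    "\<not> crown6_less b c" "\<not> crown6_less c b"
  shows False
proof -
  have "a = 0 \<or> a = 1 \<or> a = 2" using assms by auto
  moreover have "b = 3 \<or> b = 4 \<or> b = 5" using assms by auto
  moreover have "c = 0 \<or> c = 1 \<or> c = 2 \<or> c = 3 \<or> c = 4 \<or> c = 5" using assms by auto
  ultimately show False using assms unfolding crown6_less_def by auto
qed

locale crw =
  fixes P :: "'a set" and lt :: "'a \<Rightarrow> 'a \<Rightarrow> bool" and i :: nat and f :: "'a \<Rightarrow> nat"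
  assumes po: "poset P lt"
    and fb: "bij_betw f (levels P lt i (i + 1)) {0..5}"
    and fo: "\<forall>x\<in>levels P lt i (i + 1). \<forall>y\<in>levels P lt i (i + 1). lt x y \<longleftrightarrow> crown6_less (f x) (f y)"
begin

abbreviation "L \<equiv> levels P lt i (i + 1)"

lemma inL: "p \<in> P \<Longrightarrow> rank P lt p = i \<or> rank P lt p = i + 1 \<Longrightarrow> p \<in> L"
  unfolding levels_def by auto

lemma Lr: "p \<in> L \<Longrightarrow> p \<in> P \<and> (rank P lt p = i \<or> rank P lt p = i + 1)"
  unfolding levels_def by auto

lemma surjL: "m \<le> 5 \<Longrightarrow> \<exists>u\<in>L. f u = m"
  using fb unfolding bij_betw_def by (metis atLeastAtMost_iff imageE zero_le)

lemma fle: "u \<in> L \<Longrightarrow> f u \<le> 5"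
  using fb unfolding bij_betw_def by auto

lemma injL: "u \<in> L \<Longrightarrow> v \<in> L \<Longrightarrow> f u = f v \<Longrightarrow> u = v"
  using fb unfolding bij_betw_def inj_on_def by blast

lemma ltL: "u \<in> L \<Longrightarrow> v \<in> L \<Longrightarrow> lt u v \<longleftrightarrow> crown6_less (f u) (f v)"
  using fo by blast

lemma L2: assumes "p \<in> P" "rank P lt p = i + 1" shows "3 \<le> f p"
proof -
  obtain v where v: "v \<in> P" "lt v p" "rank P lt v = i"
    using rank_pred[OF po assms(1)] assms(2) by auto
  have "v \<in> L" "p \<in> L" using inL v assms by auto
  then have "crown6_less (f v) (f p)" using ltL v by blast
  then show ?thesis using crown_bds by blast
qed

lemma L1: assumes "p \<in> P" "rank P lt p = i" shows "f p < 3"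
proof (rule ccontr)
  assume "\<not> f p < 3"
  have pL: "p \<in> L" using inL assms by auto
  have "f p \<le> 5" using fle pL .
  have "f p - 3 \<le> 5" using \<open>f p \<le> 5\<close> by simp
  then obtain u where u: "u \<in> L" "f u = f p - 3" using surjL by blast
  moreover have "f p = 3 \<or> f p = 4 \<or> f p = 5" using \<open>\<not> f p < 3\<close> \<open>f p \<le> 5\<close> by auto
  ultimately have "crown6_less (f u) (f p)" using u unfolding crown6_less_def
    by auto
  then have "lt u p" using ltL u pL by blast
  then have "rank P lt u < rank P lt p" using rank_mono[OF po] Lr[OF u(1)] assms by blast
  then show False using Lr[OF u(1)] assms by auto
qed

lemma lev_i: "level P lt i = {p \<in> L. f p < 3}"
proof (intro set_eqI iffI)
  fix p assume "p \<in> level P lt i"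
  then have "p \<in> P" "rank P lt p = i" unfolding level_def by auto
  then show "p \<in> {p \<in> L. f p < 3}" using L1 inL by auto
next
  fix p assume a: "p \<in> {p \<in> L. f p < 3}"
  then have "p \<in> P" "rank P lt p = i \<or> rank P lt p = i + 1" using Lr by auto
  moreover have "rank P lt p \<noteq> i + 1" using L2 a calculation(1) by force
  ultimately show "p \<in> level P lt i" unfolding level_def by auto
qed

lemma lev_i1: "level P lt (i + 1) = {p \<in> L. 3 \<le> f p}"
proof (intro set_eqI iffI)
  fix p assume "p \<in> level P lt (i + 1)"
  then have "p \<in> P" "rank P lt p = i + 1" unfolding level_def by auto
  then show "p \<in> {p \<in> L. 3 \<le> f p}" using L2 inL by auto
next
  fix p assume a: "p \<in> {p \<in> L. 3 \<le> f p}"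
  then have "p \<in> P" "rank P lt p = i \<or> rank P lt p = i + 1" using Lr by auto
  moreover have "rank P lt p \<noteq> i" using L1 a calculation(1) by force
  ultimately show "p \<in> level P lt (i + 1)" unfolding level_def by auto
qed

lemma K3: "card (level P lt i) = 3" "card (level P lt (i + 1)) = 3"
proof -
  have inj: "inj_on f L" using fb unfolding bij_betw_def by blast
  have "f ` {p \<in> L. f p < 3} = {0,1,2}"
  proof
    show "f ` {p \<in> L. f p < 3} \<subseteq> {0,1,2}" by auto
    show "{0,1,2} \<subseteq> f ` {p \<in> L. f p < 3}"
    proof
      fix m :: nat assume "m \<in> {0,1,2}"
      then have m: "m \<le> 5" "m < 3" by auto
      then obtain u where "u \<in> L" "f u = m" using surjL by blast
      then show "m \<in> f ` {p \<in> L. f p < 3}" using m by (intro image_eqI[of m f u]) auto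
    qed
  qed
  moreover have "card (f ` {p \<in> L. f p < 3}) = card {p \<in> L. f p < 3}"
    by (rule card_image) (rule inj_on_subset[OF inj], auto)
  ultimately show "card (level P lt i) = 3" using lev_i by simp
  have "f ` {p \<in> L. 3 \<le> f p} = {3,4,5}"
  proof
    show "f ` {p \<in> L. 3 \<le> f p} \<subseteq> {3,4,5}"
    proof
      fix m assume "m \<in> f ` {p \<in> L. 3 \<le> f p}"
      then obtain u where "u \<in> L" "3 \<le> f u" "m = f u" by blast
      moreover have "f u \<le> 5" using fle calculation(1) .
      ultimately show "m \<in> {3,4,5}" by auto
    qed
    show "{3,4,5} \<subseteq> f ` {p \<in> L. 3 \<le> f p}"
    proof
      fix m :: nat assume "m \<in> {3,4,5}"
      then have m: "m \<le> 5" "3 \<le> m" by auto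
      then obtain u where "u \<in> L" "f u = m" using surjL by blast
      then show "m \<in> f ` {p \<in> L. 3 \<le> f p}" using m by (intro image_eqI[of m f u]) auto
    qed
  qed
  moreover have "card (f ` {p \<in> L. 3 \<le> f p}) = card {p \<in> L. 3 \<le> f p}"
    by (rule card_image) (rule inj_on_subset[OF inj], auto)
  ultimately show "card (level P lt (i + 1)) = 3" using lev_i1 by simp
qed

lemma K1: assumes "x \<in> P" "rank P lt x = i"
  shows "\<exists>u. \<forall>v\<in>P. rank P lt v = i + 1 \<longrightarrow> v \<noteq> u \<longrightarrow> lt x v"
proof -
  define t where "t = (if f x = 0 then 4 else if f x = 1 then 5 else (3::nat))"
  have fx: "f x < 3" using L1 assms .
  have "t \<le> 5" unfolding t_def by simp
  then obtain u where u: "u \<in> L" "f u = t" using surjL[of t] by blast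
  have xL: "x \<in> L" using inL assms by auto
  show ?thesis
  proof (intro exI ballI impI)
    fix v assume v: "v \<in> P" "rank P lt v = i + 1" "v \<noteq> u"
    have vL: "v \<in> L" using inL v by auto
    have "f v \<noteq> t" using injL[OF vL u(1)] u v by auto
    moreover have "3 \<le> f v" "f v \<le> 5" using L2 v fle vL by auto
    moreover have "f x = 0 \<or> f x = 1 \<or> f x = 2" using fx by auto
    moreover have "f v = 3 \<or> f v = 4 \<or> f v = 5" using \<open>3 \<le> f v\<close> \<open>f v \<le> 5\<close> by auto
    ultimately have "crown6_less (f x) (f v)" unfolding t_def crown6_less_def
      by auto
    then show "lt x v" using ltL xL vL by blast
  qed
qed

lemma K2: assumes "y \<in> P" "rank P lt y = i + 1"
  shows "\<exists>d. \<forall>v\<in>P. rank P lt v = i \<longrightarrow> v \<noteq> d \<longrightarrow> lt v y"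
proof -
  define t where "t = (if f y = 3 then 2 else if f y = 4 then 0 else (1::nat))"
  have yL: "y \<in> L" using inL assms by auto
  have fy: "3 \<le> f y" "f y \<le> 5" using L2 assms fle yL by auto
  have "t \<le> 5" unfolding t_def by simp
  then obtain u where u: "u \<in> L" "f u = t" using surjL[of t] by blast
  show ?thesis
  proof (intro exI ballI impI)
    fix v assume v: "v \<in> P" "rank P lt v = i" "v \<noteq> u"
    have vL: "v \<in> L" using inL v by auto
    have "f v \<noteq> t" using injL[OF vL u(1)] u v by auto
    moreover have "f v < 3" using L1 v by auto
    moreover have "f v = 0 \<or> f v = 1 \<or> f v = 2" using \<open>f v < 3\<close> by auto
    moreover have "f y = 3 \<or> f y = 4 \<or> f y = 5" using fy by auto
    ultimately have "crown6_less (f v) (f y)" unfolding t_def crown6_less_def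
      by auto
    then show "lt v y" using ltL yL vL by blast
  qed
qed

lemma K4: assumes "x \<in> P" "z \<in> P" "w \<in> P" "x \<noteq> w" "z \<noteq> w"
  "rank P lt x = i" "rank P lt z = i + 1" "rank P lt w = i \<or> rank P lt w = i + 1"
  "\<not> lt x z" "\<not> lt z x" "\<not> lt x w" "\<not> lt w x" "\<not> lt z w" "\<not> lt w z"
  shows False
proof -
  have L: "x \<in> L" "z \<in> L" "w \<in> L" using inL assms by auto
  show False
  proof (rule crown_no3[of "f x" "f z" "f w"])
    show "f x < 3" using L1 assms by auto
    show "3 \<le> f z" using L2 assms by auto
    show "f z \<le> 5" "f w \<le> 5" using fle L by auto
    show "f x \<noteq> f w" using injL[OF L(1) L(3)] assms(4) by blast
    show "f z \<noteq> f w" using injL[OF L(2) L(3)] assms(5) by blast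
  qed (use ltL[OF L(1) L(2)] ltL[OF L(2) L(1)] ltL[OF L(1) L(3)] ltL[OF L(3) L(1)]
          ltL[OF L(2) L(3)] ltL[OF L(3) L(2)] assms in simp_all)
qed

end


locale stk =
  fixes P :: "'a set" and lt :: "'a \<Rightarrow> 'a \<Rightarrow> bool" and n :: nat
  assumes po: "poset P lt" and n1: "1 \<le> n" and rk: "ranked_of_rank P lt n"
    and cr: "\<forall>i<n. order_iso (levels P lt i (i + 1)) lt {0..5::nat} crown6_less"
begin

lemma crw_of: "i < n \<Longrightarrow> \<exists>f. crw P lt i f"
  using cr po unfolding order_iso_def crw_def by blast

lemma rle: "p \<in> P \<Longrightarrow> rank P lt p \<le> n"
  using rank_le_n[OF po rk] by blast

lemma trans: "x \<in> P \<Longrightarrow> y \<in> P \<Longrightarrow> z \<in> P \<Longrightarrow> lt x y \<Longrightarrow> lt y z \<Longrightarrow> lt x z"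
  using po unfolding poset_def by blast

lemma card_lev: "r \<le> n \<Longrightarrow> card (level P lt r) = 3"
proof -
  assume r: "r \<le> n"
  show ?thesis
  proof (cases "r < n")
    case True
    then obtain f where "crw P lt r f" using crw_of by blast
    then show ?thesis using crw.K3(1) by blast
  next
    case False
    then have "r - 1 < n" "r = r - 1 + 1" using r n1 by auto
    then obtain f where "crw P lt (r - 1) f" using crw_of by blast
    then show ?thesis using crw.K3(2) \<open>r = r - 1 + 1\<close> by metis
  qed
qed

lemma D2:
  assumes "x \<in> P" "w \<in> P" "rank P lt x = a" "rank P lt w = a + 2"
  shows "lt x w"
proof -
  have "a + 2 \<le> n" using rle[OF assms(2)] assms(4) by simp
  then obtain f g where f: "crw P lt a f" and g: "crw P lt (a + 1) g" using crw_of
  proof -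
    have "a < n" "a + 1 < n" using \<open>a + 2 \<le> n\<close> by auto
    then show ?thesis using crw_of that by blast
  qed
  obtain u where u: "\<forall>v\<in>P. rank P lt v = a + 1 \<longrightarrow> v \<noteq> u \<longrightarrow> lt x v"
    using crw.K1[OF f assms(1,3)] by blast
  obtain d where d: "\<forall>v\<in>P. rank P lt v = a + 1 \<longrightarrow> v \<noteq> d \<longrightarrow> lt v w"
    using crw.K2[OF g assms(2)] assms(4) by auto
  have c3: "card (level P lt (a + 1)) = 3" using crw.K3(2)[OF f] .
  have "\<not> level P lt (a + 1) \<subseteq> {u, d}"
  proof
    assume "level P lt (a + 1) \<subseteq> {u, d}"
    then have "card (level P lt (a + 1)) \<le> card {u, d}" by (simp add: card_mono)
    also have "\<dots> \<le> 2" by (simp add: card_insert_le_m1)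
    finally show False using c3 by simp
  qed
  then obtain v where v: "v \<in> P" "rank P lt v = a + 1" "v \<noteq> u" "v \<noteq> d"
    unfolding level_def by blast
  then show ?thesis using u d trans assms by blast
qed

lemma Dk:
  assumes "x \<in> P" "rank P lt x = a"
  shows "\<forall>w\<in>P. rank P lt w = a + 2 + k \<longrightarrow> lt x w"
proof (induction k)
  case 0
  then show ?case using D2 assms by simp
next
  case (Suc k)
  show ?case
  proof (intro ballI impI)
    fix w assume w: "w \<in> P" "rank P lt w = a + 2 + Suc k"
    then obtain v where v: "v \<in> P" "lt v w" "rank P lt v = a + 2 + k"
      using rank_pred[OF po w(1)] by auto
    then show "lt x w" using Suc trans assms w by blast
  qed
qed

lemma close:
  assumes "x \<in> P" "w \<in> P" "\<not> lt x w" "\<not> lt w x"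
  shows "rank P lt w \<le> rank P lt x + 1"
proof (rule ccontr)
  assume "\<not> ?thesis"
  then have "rank P lt w = rank P lt x + 2 + (rank P lt w - rank P lt x - 2)" by simp
  then obtain k where "rank P lt w = rank P lt x + 2 + k" by blast
  then show False using Dk[OF assms(1) refl, of k] assms by blast
qed

lemma antichain3:
  assumes "S \<subseteq> P" "card S = 3" "\<forall>x\<in>S. \<forall>y\<in>S. \<not> lt x y"
  shows "\<exists>i. S = level P lt i"
proof -
  obtain a b c where abc: "S = {a, b, c}" "a \<noteq> b" "b \<noteq> c" "a \<noteq> c"
    using assms(2) card_3_iff by metis
  have inP: "a \<in> P" "b \<in> P" "c \<in> P" using abc assms(1) by auto
  have nl: "\<not> lt a b" "\<not> lt b a" "\<not> lt a c" "\<not> lt c a" "\<not> lt b c" "\<not> lt c b"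
    using assms(3) abc by auto
  have bad: "False" if "p \<in> S" "q \<in> S" "w \<in> S" "p \<noteq> w" "q \<noteq> w"
     "rank P lt q = rank P lt p + 1"
     "rank P lt w = rank P lt p \<or> rank P lt w = rank P lt p + 1" for p q w
  proof -
    have "rank P lt p < n" using rle[of q] that assms(1) by auto
    then obtain f where f: "crw P lt (rank P lt p) f" using crw_of by blast
    show False
      by (rule crw.K4[OF f, of p q w]) (use that assms in auto)
  qed
  have cl: "rank P lt y \<le> rank P lt x + 1" if "x \<in> S" "y \<in> S" "x \<noteq> y" for x y
    using close[of x y] that assms by blast
  have eq: "rank P lt b = rank P lt a \<and> rank P lt c = rank P lt a"
  proof (rule ccontr)
    assume ne: "\<not> ?thesis"
    have S: "a \<in> S" "b \<in> S" "c \<in> S" using abc by auto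
    note c1 = cl[OF S(1) S(2) abc(2)] cl[OF S(2) S(1) abc(2)[symmetric]]
      cl[OF S(1) S(3) abc(4)] cl[OF S(3) S(1) abc(4)[symmetric]]
      cl[OF S(2) S(3) abc(3)] cl[OF S(3) S(2) abc(3)[symmetric]]
    note b = bad[OF S(1) S(2) S(3) abc(4) abc(3)] bad[OF S(2) S(1) S(3) abc(3) abc(4)]
      bad[OF S(1) S(3) S(2) abc(2) abc(3)[symmetric]] bad[OF S(3) S(1) S(2) abc(3)[symmetric] abc(2)]
      bad[OF S(2) S(3) S(1) abc(2)[symmetric] abc(4)[symmetric]]
      bad[OF S(3) S(2) S(1) abc(4)[symmetric] abc(2)[symmetric]]
    consider "rank P lt b = rank P lt a + 1" | "rank P lt a = rank P lt b + 1"
      | "rank P lt b = rank P lt a" "rank P lt c = rank P lt a + 1"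
      | "rank P lt b = rank P lt a" "rank P lt a = rank P lt c + 1"
      using c1 ne by linarith
    then show False
    proof cases
      case 1
      then show False using b(1) c1 by linarith
    next
      case 2
      then show False using b(2) c1 by linarith
    next
      case 3
      then show False using b(3) c1 by linarith
    next
      case 4
      then show False using b(4) c1 by linarith
    qed
  qed
  define r where "r = rank P lt a"
  have sub: "S \<subseteq> level P lt r" using abc inP eq unfolding r_def level_def by auto
  have fin: "finite (level P lt r)" using po unfolding poset_def level_def by simp
  have "card (level P lt r) = 3" using card_lev rle inP(1) r_def by blast
  then have "S = level P lt r" using card_subset_eq[OF fin sub] assms(2) by simp
  then show ?thesis by blast
qed

end

theorem lemma5p1:
  fixes P Q :: "'a set" and lt :: "'a \<Rightarrow> 'a \<Rightarrow> bool" and j :: nat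
  assumes "six_stack P lt"
    and "Q \<subseteq> P"
    and "is_tower_of_sections Q lt"
    and "card (level Q lt j) = 3"
  shows "\<exists>i. level Q lt j = level P lt i"
proof -
  obtain n where st: "stk P lt n" using assms(1) unfolding six_stack_def stk_def by blast
  have pq: "poset Q lt" using assms(3) unfolding is_tower_of_sections_def by blast
  have ac: "\<forall>x\<in>level Q lt j. \<forall>y\<in>level Q lt j. \<not> lt x y"
  proof (intro ballI notI)
    fix x y assume "x \<in> level Q lt j" "y \<in> level Q lt j" "lt x y"
    then show False using rank_mono[OF pq, of x y] unfolding level_def by auto
  qed
  have "level Q lt j \<subseteq> P" using assms(2) unfolding level_def by auto
  then show ?thesis using stk.antichain3[OF st _ assms(4) ac] by blast
qed

end
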